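(* Let $N\ge3$ be an integer, $(N+2)/(N-2)<p<p_{JL}$ and $\lambda>0$, and let $u_*$ be the unique radial singular solution of $u''+\frac{N-1}{r}u'+\lambda u+|u|^{p-1}u=0$. Then there exists $r_*>0$ such that $u_*(r_* )=0$ and $u_*(r)>0$ for $0<r<r_*$.
   Context: It is known (Merle–Peletier) that the equation has a unique solution $u_*$ near $r=0$ satisfying $u_*(r)=A r^{-2/(p-1)}(1+o(1))$ as $r\to0^+$, where $A=\left[\frac{2}{p-1}\left(N-2-\frac{2}{p-1}\right)\right]^{1/(p-1)}$; it is called the singular solution. The Joseph–Lundgren exponent is $p_{JL}=1+\frac{4}{N-4-2\sqrt{N-1}}$ for $N\ge11$ and $p_{JL}=\infty$ for $3\le N\le10$. *)

theory Defs
  imports "HOL-Analysis.Analysis"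
begin

definition below_pJL :: "nat \<Rightarrow> real \<Rightarrow> bool" where
  "below_pJL N p \<longleftrightarrow>
     (N \<le> 10 \<or> p < 1 + 4 / (real N - 4 - 2 * sqrt (real N - 1)))"

definition singA :: "nat \<Rightarrow> real \<Rightarrow> real" where
  "singA N p = (2 / (p - 1) * (real N - 2 - 2 / (p - 1))) powr (1 / (p - 1))"

definition radial_solution :: "nat \<Rightarrow> real \<Rightarrow> real \<Rightarrow> (real \<Rightarrow> real) \<Rightarrow> bool" where
  "radial_solution N p lam u \<longleftrightarrow>
     (\<forall>r>0. (u has_real_derivative deriv u r) (at r) \<and>
            (deriv u has_real_derivative deriv (deriv u) r) (at r) \<and>
            deriv (deriv u) r + (real N - 1) / r * deriv u r + lam * u r
              + \<bar>u r\<bar> powr (p - 1) * u r = 0)"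

definition singular_at_origin :: "nat \<Rightarrow> real \<Rightarrow> (real \<Rightarrow> real) \<Rightarrow> bool" where
  "singular_at_origin N p u \<longleftrightarrow>
     ((\<lambda>r. u r / (singA N p * r powr (- 2 / (p - 1)))) \<longlongrightarrow> 1) (at_right 0)"

end

theory Submission
  imports Defs
begin

lemma powr_deriv_alt:
  assumes "(x::real) > 0"
  shows "((\<lambda>z. z powr m) has_real_derivative m * (x powr m) / x) (at x)"
proof -
  have "m * x powr (m - 1) = m * (x powr m) / x" using assms by (simp add: powr_diff)
  with has_real_derivative_powr[OF assms, of m] show ?thesis by simp
qed

lemma W_deriv:
  fixes u d :: "real \<Rightarrow> real"
  assumes x: "x > 0" and du: "(u has_real_derivative d x) (at x)" and dd: "(d has_real_derivative ddx) (at x)"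
    and eq: "ddx + (2*m)/x * d x + lam * u x + g = 0"
  shows "((\<lambda>x. (m * x powr m / x * u x + x powr m * d x) * sin (k*(x-a)) - x powr m * u x * k * cos (k*(x-a)))
     has_real_derivative (sin (k*(x-a)) * (x powr m * (u x * (m*(m-1)/x^2 + k^2 - lam) - g)))) (at x)"
proof -
  note P = powr_deriv_alt[OF x, of m]
  have Q: "((\<lambda>z. m * z powr m / z) has_real_derivative m * (m-1) * x powr m / x^2) (at x)"
  proof -
    have "((\<lambda>z. m * z powr m / z) has_real_derivative (m * (m * (x powr m) / x) * x - m * x powr m * 1) / (x*x)) (at x)"
      using x by (intro DERIV_divide DERIV_cmult P DERIV_ident) auto
    then show ?thesis by (rule DERIV_cong) (use x in \<open>simp add: field_simps power2_eq_square\<close>)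
  qed
  have S: "((\<lambda>z. sin (k*(z-a))) has_real_derivative cos (k*(x-a)) * k) (at x)"
    by (auto intro!: derivative_eq_intros)
  have C: "((\<lambda>z. cos (k*(z-a))) has_real_derivative - sin (k*(x-a)) * k) (at x)"
    by (auto intro!: derivative_eq_intros)
  have A: "((\<lambda>z. m * z powr m / z * u z + z powr m * d z) has_real_derivative
     (m * z0 powr m / z0 * d z0 + m * (m-1) * z0 powr m / z0^2 * u z0) + (z0 powr m * ddx + m * z0 powr m / z0 * d z0)) (at z0)" if "z0 = x" for z0
    using DERIV_add[OF DERIV_mult'[OF Q du] DERIV_mult'[OF P dd]] that by simp
  have B: "((\<lambda>z. z powr m * u z * k) has_real_derivative (x powr m * d x + m * x powr m / x * u x) * k) (at x)"
    using DERIV_cmult_right[OF DERIV_mult'[OF P du], of k] by simp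
  have "((\<lambda>x. (m * x powr m / x * u x + x powr m * d x) * sin (k*(x-a)) - x powr m * u x * k * cos (k*(x-a)))
     has_real_derivative
      ((m * x powr m / x * u x + x powr m * d x) * (cos (k*(x-a)) * k) + ((m * x powr m / x * d x + m * (m-1) * x powr m / x^2 * u x) + (x powr m * ddx + m * x powr m / x * d x)) * sin (k*(x-a)))
       - (x powr m * u x * k * (- sin (k*(x-a)) * k) + (x powr m * d x + m * x powr m / x * u x) * k * cos (k*(x-a))))
    (at x)"
    by (rule DERIV_diff[OF DERIV_mult'[OF A[OF refl] S] DERIV_mult'[OF B C]])
  moreover have D: "ddx = - (2*m)/x * d x - lam * u x - g" using eq by simp
  ultimately show ?thesis
    by (elim DERIV_cong) (unfold D, use x in \<open>simp add: field_simps power2_eq_square\<close>)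
qed

lemma sturm:
  fixes u d dd :: "real \<Rightarrow> real"
  assumes m1: "m \<ge> 1" and lam: "lam > 0" and k: "k = sqrt (lam/2)" and a: "a > 0"
    and aa: "m*(m-1) \<le> lam/2 * a^2"
    and ode: "\<And>x. x > 0 \<Longrightarrow> (u has_real_derivative d x) (at x) \<and> (d has_real_derivative dd x) (at x) \<and>
        dd x + (2*m)/x * d x + lam * u x + \<bar>u x\<bar> powr (p-1) * u x = 0"
  shows "\<exists>x. a \<le> x \<and> x \<le> a + pi/k \<and> u x \<le> 0"
proof (rule ccontr)
  assume "\<not> ?thesis"
  then have pos: "\<And>x. a \<le> x \<Longrightarrow> x \<le> a + pi/k \<Longrightarrow> u x > 0" by force
  have k0: "k > 0" using k lam by simp
  have k2: "k^2 = lam/2" using k lam by simp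
  define b where "b = a + pi/k"
  have ab: "a \<le> b" using k0 by (simp add: b_def)
  define W where "W = (\<lambda>x. (m * x powr m / x * u x + x powr m * d x) * sin (k*(x-a)) - x powr m * u x * k * cos (k*(x-a)))"
  have "W b \<le> W a"
  proof (rule DERIV_nonpos_imp_nonincreasing[OF ab])
    fix x assume x: "a \<le> x" "x \<le> b"
    have x0: "x > 0" using x a by simp
    have ux: "u x > 0" using pos x b_def by simp
    let ?g = "\<bar>u x\<bar> powr (p-1) * u x"
    have g0: "?g \<ge> 0" using ux by simp
    have s0: "sin (k*(x-a)) \<ge> 0"
    proof (rule sin_ge_zero)
      show "0 \<le> k*(x-a)" using k0 x by simp
      have "k*(x-a) \<le> k*(pi/k)" using k0 x b_def by (intro mult_left_mono) auto
      then show "k*(x-a) \<le> pi" using k0 by simp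
    qed
    have "a^2 \<le> x^2" using x a by (intro power_mono) auto
    then have "lam/2 * a^2 \<le> lam/2 * x^2" using lam by (intro mult_left_mono) auto
    then have "m*(m-1) \<le> lam/2 * x^2" using aa by linarith
    then have "m*(m-1)/x^2 \<le> lam/2" using x0 by (simp add: divide_simps)
    then have br: "m*(m-1)/x^2 + k^2 - lam \<le> 0" using k2 lam by linarith
    have "u x * (m*(m-1)/x^2 + k^2 - lam) - ?g \<le> 0"
      using br ux g0 by (smt (verit) mult_nonneg_nonpos)
    then have "sin (k*(x-a)) * (x powr m * (u x * (m*(m-1)/x^2 + k^2 - lam) - ?g)) \<le> 0"
      using s0 x0 by (simp add: mult_nonneg_nonpos)
    moreover have "(W has_real_derivative sin (k*(x-a)) * (x powr m * (u x * (m*(m-1)/x^2 + k^2 - lam) - ?g))) (at x)"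
      unfolding W_def using ode[OF x0] x0 by (intro W_deriv) auto
    ultimately show "\<exists>y. (W has_real_derivative y) (at x) \<and> y \<le> 0" by blast
  qed
  moreover have "W a < 0"
    using pos[of a] a k0 unfolding W_def by simp
  moreover have "W b > 0"
  proof -
    have "k*(b-a) = pi" using k0 b_def by simp
    then have "W b = b powr m * u b * k" unfolding W_def by simp
    moreover have "u b > 0" using pos ab b_def by simp
    ultimately show ?thesis using ab a k0 by simp
  qed
  ultimately show False by simp
qed

theorem proposition3p2:
  fixes N :: nat and p lam :: real and u :: "real \<Rightarrow> real"
  assumes "N \<ge> 3"
    and "(real N + 2) / (real N - 2) < p" and "below_pJL N p"
    and "lam > 0"
    and "radial_solution N p lam u"
    and "singular_at_origin N p u"
  shows "\<exists>r_star>0. u r_star = 0 \<and> (\<forall>r. 0 < r \<and> r < r_star \<longrightarrow> u r > 0)"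
proof -
  have N3: "real N \<ge> 3" using assms(1) by simp
  have hp: "(real N + 2) < p * (real N - 2)" using assms(2) N3 by (simp add: divide_simps)
  have p1: "p - 1 > 0"
  proof -
    have "(real N + 2) / (real N - 2) > 1" using N3 by (simp add: divide_simps)
    then show ?thesis using assms(2) by simp
  qed
  have p4: "4 < (p - 1) * (real N - 2)" using hp by (simp add: algebra_simps)
  have "2 / (p-1) < (real N - 2) / 2" using p1 p4 N3 by (simp add: divide_simps mult.commute)
  moreover have "\<And>q::real. q < (real N - 2) / 2 \<Longrightarrow> real N - 2 - q > 0" using N3 by simp
  ultimately have "real N - 2 - 2 / (p - 1) > 0" by blast
  then have B0: "2 / (p - 1) * (real N - 2 - 2 / (p - 1)) > 0" using p1 by (intro mult_pos_pos) auto
  have A0: "singA N p > 0" unfolding singA_def powr_gt_zero using B0 by linarith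
  have ev: "eventually (\<lambda>r. u r / (singA N p * r powr (- 2 / (p - 1))) > 1/2) (at_right 0)"
    using assms(6) unfolding singular_at_origin_def by (rule order_tendstoD) simp
  then obtain \<delta> where \<delta>: "\<delta> > 0" "\<And>r. 0 < r \<Longrightarrow> r < \<delta> \<Longrightarrow> u r / (singA N p * r powr (- 2 / (p - 1))) > 1/2"
    unfolding eventually_at_right_field by auto
  have posd: "u r > 0" if "0 < r" "r < \<delta>" for r
  proof -
    have den: "singA N p * r powr (- 2 / (p - 1)) > 0" using A0 that by simp
    have "u r / (singA N p * r powr (- 2 / (p - 1))) > 0" using \<delta>(2)[OF that] by linarith
    then show ?thesis using den by (simp add: zero_less_divide_iff)
  qed
  define m where "m = (real N - 1) / 2"
  have m1: "m \<ge> 1" using N3 by (simp add: m_def)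
  define c where "c = 2*m*(m-1)/lam"
  have c0: "c \<ge> 0" using m1 assms(4) by (simp add: c_def)
  define a where "a = 1 + c"
  have a1: "a \<ge> 1" using c0 by (simp add: a_def)
  have "a \<le> a^2" using a1 by (simp add: power2_eq_square)
  then have "c \<le> a^2" using a_def by simp
  then have "lam/2 * c \<le> lam/2 * a^2" using assms(4) by (intro mult_left_mono) auto
  moreover have "lam/2 * c = m*(m-1)" using assms(4) by (simp add: c_def)
  ultimately have aa: "m*(m-1) \<le> lam/2 * a^2" by simp
  have ode: "\<And>x. x > 0 \<Longrightarrow> (u has_real_derivative deriv u x) (at x) \<and> (deriv u has_real_derivative deriv (deriv u) x) (at x) \<and>
        deriv (deriv u) x + (2*m)/x * deriv u x + lam * u x + \<bar>u x\<bar> powr (p-1) * u x = 0"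
  proof -
    fix x :: real assume x: "x > 0"
    have m2: "2*m = real N - 1" by (simp add: m_def)
    show "?thesis x" unfolding m2 using assms(5) x unfolding radial_solution_def by blast
  qed
  obtain z where z: "a \<le> z" "u z \<le> 0"
    using sturm[OF m1 assms(4) refl, of a u "deriv u" "deriv (deriv u)" p] a1 aa ode by auto
  have cont: "isCont u x" if "x > 0" for x
    using ode[OF that] DERIV_isCont by blast
  define S where "S = {r. 0 < r \<and> u r \<le> 0}"
  define rs where "rs = Inf S"
  have zS: "z \<in> S" using z a1 by (simp add: S_def)
  have bdd: "bdd_below S" unfolding S_def by (rule bdd_belowI[of _ 0]) auto
  have Sge: "s \<ge> \<delta>" if "s \<in> S" for s
    using posd that unfolding S_def by force
  have rsd: "rs \<ge> \<delta>" unfolding rs_def using zS Sge by (intro cInf_greatest) auto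
  have rs0: "rs > 0" using rsd \<delta> by simp
  have below: "u r > 0" if "0 < r" "r < rs" for r
  proof (rule ccontr)
    assume "\<not> u r > 0"
    then have "r \<in> S" using that by (simp add: S_def)
    then have "rs \<le> r" unfolding rs_def using bdd by (rule cInf_lower)
    then show False using that by simp
  qed
  have "u rs = 0"
  proof (rule ccontr)
    assume nz: "u rs \<noteq> 0"
    obtain e where e: "e > 0" "\<And>y. dist y rs < e \<Longrightarrow> dist (u y) (u rs) < \<bar>u rs\<bar>"
      using cont[OF rs0] nz unfolding continuous_at_eps_delta
      by (metis zero_less_abs_iff)
    show False
    proof (cases "u rs > 0")
      case True
      have "rs + e \<le> rs" unfolding rs_def
      proof (rule cInf_greatest)
        show "S \<noteq> {}" using zS by auto
        fix s assume s: "s \<in> S"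
        have "rs \<le> s" unfolding rs_def using s bdd by (rule cInf_lower)
        moreover have "\<not> dist s rs < e"
        proof
          assume "dist s rs < e"
          from e(2)[OF this] True have "u s > 0" by (simp add: dist_real_def abs_if split: if_splits)
          then show False using s by (simp add: S_def)
        qed
        ultimately show "Inf S + e \<le> s" unfolding rs_def by (simp add: dist_real_def)
      qed
      then show False using e by simp
    next
      case False
      then have neg: "u rs < 0" using nz by simp
      define y where "y = max (rs/2) (rs - e/2)"
      have y: "0 < y" "y < rs" "dist y rs < e" using rs0 e by (auto simp: y_def dist_real_def)
      from e(2)[OF y(3)] neg have "u y < 0" by (simp add: dist_real_def abs_if split: if_splits)
      then show False using below[OF y(1,2)] by simp
    qed
  qed
  then show ?thesis using rs0 below by blast
qed

end
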